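(* Let $H$ be a Hopf algebra and $A$ an $H$-Galois object, and let $\mathcal{C}(A,H)$ be its Ehresmann–Schauenburg Hopf algebra. For every character $\phi$ of $\mathcal{C}(A,H)$ (equivalently, every bisection), $Ad_\phi=\mathrm{coinn}(\phi)$, i.e. for all $c\in\mathcal{C}(A,H)$, $$F_\phi(a)\otimes F_\phi(\tilde a)\big|_{c=a\otimes\tilde a}=\phi(c_{(1)})\,c_{(2)}\,\phi(S_{\mathcal C}(c_{(3)})),$$ where $Ad_\phi(a\otimes\tilde a):=F_\phi(a)\otimes F_\phi(\tilde a)$ and $F_\phi(a)=\phi(a_{(0)}\otimes a_{(1)}^{\langle1\rangle})\,a_{(1)}^{\langle2\rangle}$.
   Context: Algebras over $\mathbb{C}$; Sweedler notation with implicit summation. An $H$-Galois object is a right $H$-comodule algebra $A$ (coaction $\delta^A(a)=a_{(0)}\otimes a_{(1)}$) with coinvariants $A^{coH}=\mathbb{C}$ such that $\chi:A\otimes A\to A\otimes H$, $a'\otimes a\mapsto a'a_{(0)}\otimes a_{(1)}$, is bijective; $\tau(h)=\chi^{-1}(1\otimes h)=:h^{\langle1\rangle}\otimes h^{\langle2\rangle}$. $\mathcal{C}(A,H)=(A\otimes A)^{coH}=\{\sum a\otimes\tilde a:\sum a_{(0)}\otimes\tilde a_{(0)}\otimes a_{(1)}\tilde a_{(1)}=\sum a\otimes\tilde a\otimes1\}$ is a Hopf algebra with product $(a\otimes\tilde a)(a'\otimes\tilde a')=aa'\otimes\tilde a'\tilde a$, unit $1\otimes1$, coproduct $\Delta_{\mathcal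 C}(a\otimes\tilde a)=a_{(0)}\otimes a_{(1)}^{\langle1\rangle}\otimes a_{(1)}^{\langle2\rangle}\otimes\tilde a=:c_{(1)}\otimes c_{(2)}$ for $c=a\otimes\tilde a$, counit $\epsilon_{\mathcal C}(a\otimes\tilde a)=a\tilde a$, antipode $S_{\mathcal C}(a\otimes\tilde a)=\tilde a_{(0)}\otimes\tilde a_{(1)}^{\langle1\rangle}a\,\tilde a_{(1)}^{\langle2\rangle}$. A character is a unital algebra map $\phi:\mathcal{C}(A,H)\to\mathbb{C}$. For a character $\phi$ of a Hopf algebra $K$, $\mathrm{coinn}(\phi):K\to K$, $h\mapsto\phi(h_{(1)})h_{(2)}\phi(S(h_{(3)}))$. *)

theory Defs
  imports Complex_Main
begin

class complex_algebra_1 = ring_1 +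
  fixes scaleC :: "complex \<Rightarrow> 'a \<Rightarrow> 'a"  (infixr \<open>*\<^sub>C\<close> 75)
  assumes scaleC_add_right: "c *\<^sub>C (x + y) = c *\<^sub>C x + c *\<^sub>C y"
    and scaleC_add_left: "(c + d) *\<^sub>C x = c *\<^sub>C x + d *\<^sub>C x"
    and scaleC_scaleC: "c *\<^sub>C (d *\<^sub>C x) = (c * d) *\<^sub>C x"
    and scaleC_one: "(1::complex) *\<^sub>C x = x"
    and scaleC_mult_left: "(c *\<^sub>C x) * y = c *\<^sub>C (x * y)"
    and scaleC_mult_right: "x * (c *\<^sub>C y) = c *\<^sub>C (x * y)"

text \<open>An element of a tensor product V1 (x) ... (x) Vn of complex vector spaces is
represented by a finite list of elementary tensors (tuples); two such lists represent the
same tensor iff every multilinear form V1 x ... x Vn -> C takes the same (summed) value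
on them (over a field, tensors are separated by multilinear forms).\<close>

definition clinear :: "('a::complex_algebra_1 \<Rightarrow> complex) \<Rightarrow> bool" where
  "clinear f \<longleftrightarrow> (\<forall>x y. f (x + y) = f x + f y) \<and> (\<forall>c x. f (c *\<^sub>C x) = c * f x)"

definition bilin :: "('a::complex_algebra_1 \<Rightarrow> 'b::complex_algebra_1 \<Rightarrow> complex) \<Rightarrow> bool" where
  "bilin f \<longleftrightarrow> (\<forall>y. clinear (\<lambda>x. f x y)) \<and> (\<forall>x. clinear (\<lambda>y. f x y))"

definition trilin ::
  "('a::complex_algebra_1 \<Rightarrow> 'b::complex_algebra_1 \<Rightarrow> 'c::complex_algebra_1 \<Rightarrow> complex) \<Rightarrow> bool" where
  "trilin f \<longleftrightarrow> (\<forall>y z. clinear (\<lambda>x. f x y z)) \<and> (\<forall>x z. clinear (\<lambda>y. f x y z))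
      \<and> (\<forall>x y. clinear (\<lambda>z. f x y z))"

definition teq2 :: "('a::complex_algebra_1 \<times> 'b::complex_algebra_1) list \<Rightarrow> ('a \<times> 'b) list \<Rightarrow> bool" where
  "teq2 xs ys \<longleftrightarrow> (\<forall>f. bilin f \<longrightarrow>
      (\<Sum>(x, y)\<leftarrow>xs. f x y) = (\<Sum>(x, y)\<leftarrow>ys. f x y))"

definition teq3 :: "('a::complex_algebra_1 \<times> 'b::complex_algebra_1 \<times> 'c::complex_algebra_1) list
    \<Rightarrow> ('a \<times> 'b \<times> 'c) list \<Rightarrow> bool" where
  "teq3 xs ys \<longleftrightarrow> (\<forall>f. trilin f \<longrightarrow>
      (\<Sum>(x, y, z)\<leftarrow>xs. f x y z) = (\<Sum>(x, y, z)\<leftarrow>ys. f x y z))"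

definition tmult :: "('a::complex_algebra_1 \<times> 'b::complex_algebra_1) list \<Rightarrow> ('a \<times> 'b) list \<Rightarrow> ('a \<times> 'b) list" where
  "tmult xs ys = concat (map (\<lambda>(a, b). map (\<lambda>(a', b'). (a * a', b * b')) ys) xs)"

text \<open>A Hopf algebra (H, Delta, eps, S) over C; the coproduct Delta h = h_(1) (x) h_(2) is given
by a representing list of elementary tensors.\<close>

definition hopf_algebra ::
  "('h::complex_algebra_1 \<Rightarrow> ('h \<times> 'h) list) \<Rightarrow> ('h \<Rightarrow> complex) \<Rightarrow> ('h \<Rightarrow> 'h) \<Rightarrow> bool" where
  "hopf_algebra \<Delta> \<epsilon> S \<longleftrightarrow>
     \<comment> \<open>linearity of the structure maps\<close>
     (\<forall>x y. teq2 (\<Delta> (x + y)) (\<Delta> x @ \<Delta> y)) \<and>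
     (\<forall>c x. teq2 (\<Delta> (c *\<^sub>C x)) (map (\<lambda>(a, b). (c *\<^sub>C a, b)) (\<Delta> x))) \<and>
     clinear \<epsilon> \<and>
     (\<forall>x y. S (x + y) = S x + S y) \<and> (\<forall>c x. S (c *\<^sub>C x) = c *\<^sub>C S x) \<and>
     \<comment> \<open>Delta and eps are unital algebra maps\<close>
     (\<forall>x y. teq2 (\<Delta> (x * y)) (tmult (\<Delta> x) (\<Delta> y))) \<and> teq2 (\<Delta> 1) [(1, 1)] \<and>
     (\<forall>x y. \<epsilon> (x * y) = \<epsilon> x * \<epsilon> y) \<and> \<epsilon> 1 = 1 \<and>
     \<comment> \<open>coassociativity\<close>
     (\<forall>x. teq3 (concat (map (\<lambda>(a, b). map (\<lambda>(a1, a2). (a1, a2, b)) (\<Delta> a)) (\<Delta> x)))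
                (concat (map (\<lambda>(a, b). map (\<lambda>(b1, b2). (a, b1, b2)) (\<Delta> b)) (\<Delta> x)))) \<and>
     \<comment> \<open>counit\<close>
     (\<forall>x. (\<Sum>(a, b)\<leftarrow>\<Delta> x. \<epsilon> a *\<^sub>C b) = x) \<and>
     (\<forall>x. (\<Sum>(a, b)\<leftarrow>\<Delta> x. \<epsilon> b *\<^sub>C a) = x) \<and>
     \<comment> \<open>antipode\<close>
     (\<forall>x. (\<Sum>(a, b)\<leftarrow>\<Delta> x. S a * b) = \<epsilon> x *\<^sub>C 1) \<and>
     (\<forall>x. (\<Sum>(a, b)\<leftarrow>\<Delta> x. a * S b) = \<epsilon> x *\<^sub>C 1)"

text \<open>Right H-comodule algebra: coaction delta a = a_(0) (x) a_(1).\<close>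
definition comodule_algebra ::
  "('h::complex_algebra_1 \<Rightarrow> ('h \<times> 'h) list) \<Rightarrow> ('h \<Rightarrow> complex)
   \<Rightarrow> ('a::complex_algebra_1 \<Rightarrow> ('a \<times> 'h) list) \<Rightarrow> bool" where
  "comodule_algebra \<Delta> \<epsilon> \<delta> \<longleftrightarrow>
     (\<forall>x y. teq2 (\<delta> (x + y)) (\<delta> x @ \<delta> y)) \<and>
     (\<forall>c x. teq2 (\<delta> (c *\<^sub>C x)) (map (\<lambda>(a, h). (c *\<^sub>C a, h)) (\<delta> x))) \<and>
     (\<forall>x y. teq2 (\<delta> (x * y)) (tmult (\<delta> x) (\<delta> y))) \<and> teq2 (\<delta> 1) [(1, 1)] \<and>
     (\<forall>x. teq3 (concat (map (\<lambda>(a, h). map (\<lambda>(b, k). (b, k, h)) (\<delta> a)) (\<delta> x)))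
                (concat (map (\<lambda>(a, h). map (\<lambda>(h1, h2). (a, h1, h2)) (\<Delta> h)) (\<delta> x)))) \<and>
     (\<forall>x. (\<Sum>(a, h)\<leftarrow>\<delta> x. \<epsilon> h *\<^sub>C a) = x)"

definition coinvariants :: "('a::complex_algebra_1 \<Rightarrow> ('a \<times> 'h::complex_algebra_1) list) \<Rightarrow> 'a set" where
  "coinvariants \<delta> = {a. teq2 (\<delta> a) [(a, 1)]}"

definition chi :: "('a::complex_algebra_1 \<Rightarrow> ('a \<times> 'h::complex_algebra_1) list)
    \<Rightarrow> ('a \<times> 'a) list \<Rightarrow> ('a \<times> 'h) list" where
  "chi \<delta> xs = concat (map (\<lambda>(a', a). map (\<lambda>(a0, h). (a' * a0, h)) (\<delta> a)) xs)"

definition galois_object ::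
  "('h::complex_algebra_1 \<Rightarrow> ('h \<times> 'h) list) \<Rightarrow> ('h \<Rightarrow> complex)
   \<Rightarrow> ('a::complex_algebra_1 \<Rightarrow> ('a \<times> 'h) list) \<Rightarrow> bool" where
  "galois_object \<Delta> \<epsilon> \<delta> \<longleftrightarrow>
     comodule_algebra \<Delta> \<epsilon> \<delta> \<and>
     coinvariants \<delta> = range (\<lambda>c. c *\<^sub>C (1::'a)) \<and>
     \<comment> \<open>chi : A (x) A -> A (x) H is bijective\<close>
     (\<forall>xs ys. teq2 (chi \<delta> xs) (chi \<delta> ys) \<longrightarrow> teq2 xs ys) \<and>
     (\<forall>zs. \<exists>xs. teq2 (chi \<delta> xs) zs)"

text \<open>Translation map tau(h) = chi^{-1}(1 (x) h) = h<1> (x) h<2> (a representative).\<close>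
definition tau :: "('a::complex_algebra_1 \<Rightarrow> ('a \<times> 'h::complex_algebra_1) list) \<Rightarrow> 'h \<Rightarrow> ('a \<times> 'a) list" where
  "tau \<delta> h = (SOME xs. teq2 (chi \<delta> xs) [(1, h)])"

section \<open>The Ehresmann--Schauenburg Hopf algebra C(A,H) = (A (x) A)^{coH}\<close>

definition esC :: "('a::complex_algebra_1 \<Rightarrow> ('a \<times> 'h::complex_algebra_1) list) \<Rightarrow> ('a \<times> 'a) list set" where
  "esC \<delta> = {xs. teq3
      (concat (map (\<lambda>(a, b). concat (map (\<lambda>(a0, h). map (\<lambda>(b0, k). (a0, b0, h * k)) (\<delta> b)) (\<delta> a))) xs))
      (map (\<lambda>(a, b). (a, b, 1)) xs)}"

definition esC_mult :: "('a::complex_algebra_1 \<times> 'a) list \<Rightarrow> ('a \<times> 'a) list \<Rightarrow> ('a \<times> 'a) list" where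
  "esC_mult xs ys = concat (map (\<lambda>(a, b). map (\<lambda>(a', b'). (a * a', b' * b)) ys) xs)"

definition esC_coprod :: "('a::complex_algebra_1 \<Rightarrow> ('a \<times> 'h::complex_algebra_1) list)
    \<Rightarrow> ('a \<times> 'a) list \<Rightarrow> (('a \<times> 'a) \<times> ('a \<times> 'a)) list" where
  "esC_coprod \<delta> xs = concat (map (\<lambda>(a, b). concat (map (\<lambda>(a0, h).
      map (\<lambda>(t1, t2). ((a0, t1), (t2, b))) (tau \<delta> h)) (\<delta> a))) xs)"

definition esC_antipode :: "('a::complex_algebra_1 \<Rightarrow> ('a \<times> 'h::complex_algebra_1) list)
    \<Rightarrow> ('a \<times> 'a) list \<Rightarrow> ('a \<times> 'a) list" where
  "esC_antipode \<delta> xs = concat (map (\<lambda>(a, b). concat (map (\<lambda>(b0, h).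
      map (\<lambda>(u1, u2). (b0, u1 * a * u2)) (tau \<delta> h)) (\<delta> b))) xs)"

text \<open>A linear functional on A (x) A is the same as a bilinear form beta on A; its value on
a tensor is the sum of beta over the elementary tensors.\<close>
definition lfun :: "('a::complex_algebra_1 \<Rightarrow> 'a \<Rightarrow> complex) \<Rightarrow> ('a \<times> 'a) list \<Rightarrow> complex" where
  "lfun \<beta> xs = (\<Sum>(a, b)\<leftarrow>xs. \<beta> a b)"

text \<open>phi = lfun beta is a character of C(A,H): a unital algebra map C(A,H) -> C
(linearity is built in).\<close>
definition esC_character :: "('a::complex_algebra_1 \<Rightarrow> ('a \<times> 'h::complex_algebra_1) list)
    \<Rightarrow> ('a \<Rightarrow> 'a \<Rightarrow> complex) \<Rightarrow> bool" where
  "esC_character \<delta> \<beta> \<longleftrightarrow> bilin \<beta> \<and>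
     lfun \<beta> [(1, 1)] = 1 \<and>
     (\<forall>xs\<in>esC \<delta>. \<forall>ys\<in>esC \<delta>. lfun \<beta> (esC_mult xs ys) = lfun \<beta> xs * lfun \<beta> ys)"

definition Fphi :: "('a::complex_algebra_1 \<Rightarrow> ('a \<times> 'h::complex_algebra_1) list)
    \<Rightarrow> ('a \<Rightarrow> 'a \<Rightarrow> complex) \<Rightarrow> 'a \<Rightarrow> 'a" where
  "Fphi \<delta> \<beta> a = (\<Sum>(a0, h)\<leftarrow>\<delta> a. \<Sum>(t1, t2)\<leftarrow>tau \<delta> h. \<beta> a0 t1 *\<^sub>C t2)"

definition Ad :: "('a::complex_algebra_1 \<Rightarrow> ('a \<times> 'h::complex_algebra_1) list)
    \<Rightarrow> ('a \<Rightarrow> 'a \<Rightarrow> complex) \<Rightarrow> ('a \<times> 'a) list \<Rightarrow> ('a \<times> 'a) list" where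
  "Ad \<delta> \<beta> xs = map (\<lambda>(a, b). (Fphi \<delta> \<beta> a, Fphi \<delta> \<beta> b)) xs"

text \<open>coinn(phi)(c) = phi(c_(1)) c_(2) phi(S_C(c_(3))), where
c_(1) (x) c_(2) (x) c_(3) = (id (x) Delta_C) Delta_C(c).\<close>
definition coinn :: "('a::complex_algebra_1 \<Rightarrow> ('a \<times> 'h::complex_algebra_1) list)
    \<Rightarrow> ('a \<Rightarrow> 'a \<Rightarrow> complex) \<Rightarrow> ('a \<times> 'a) list \<Rightarrow> ('a \<times> 'a) list" where
  "coinn \<delta> \<beta> xs = concat (map (\<lambda>(c1, d). map (\<lambda>(c2, c3).
      ((lfun \<beta> [c1] * lfun \<beta> (esC_antipode \<delta> [c3])) *\<^sub>C fst c2, snd c2))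
      (esC_coprod \<delta> [d])) (esC_coprod \<delta> xs))"

end

theory Submission
  imports Defs
begin


lemma sum_list_concat_map: "sum_list (map f (concat xss)) = (\<Sum>xs\<leftarrow>xss. sum_list (map f xs))"
  by (induct xss) auto

lemma clinear_add: "clinear f \<Longrightarrow> f (x + y) = f x + f y" by (simp add: clinear_def)
lemma clinear_scale: "clinear f \<Longrightarrow> f (c *\<^sub>C x) = c * f x" by (simp add: clinear_def)

lemma scaleC_zero_right[simp]: "c *\<^sub>C (0::'a::complex_algebra_1) = 0"
proof -
  have "c *\<^sub>C (0::'a) = c *\<^sub>C 0 + c *\<^sub>C 0" by (metis add.right_neutral scaleC_add_right)
  then show ?thesis by simp
qed
lemma scaleC_zero_left[simp]: "(0::complex) *\<^sub>C (x::'a::complex_algebra_1) = 0"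
proof -
  have "(0::complex) *\<^sub>C x = 0 *\<^sub>C x + 0 *\<^sub>C x" by (metis add.right_neutral scaleC_add_left)
  then show ?thesis by simp
qed

lemma clinear_0: "clinear f \<Longrightarrow> f 0 = 0"
  using clinear_scale[of f 0 0] by simp

lemma clinear_sum_list: "clinear f \<Longrightarrow> f (sum_list (map g xs)) = (\<Sum>x\<leftarrow>xs. f (g x))"
  by (induct xs) (auto simp: clinear_0 clinear_add)

lemma scaleC_sum_list: "c *\<^sub>C sum_list (map g xs) = (\<Sum>x\<leftarrow>xs. c *\<^sub>C (g x :: 'a::complex_algebra_1))"
  by (induct xs) (auto simp: scaleC_add_right)

lemma sum_list_scaleC_left: "(\<Sum>x\<leftarrow>xs. f x *\<^sub>C (a::'a::complex_algebra_1)) = sum_list (map f xs) *\<^sub>C a"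
  by (induct xs) (auto simp: scaleC_add_left)

lemma mult_sum_list_left: "(a::'a::ring_1) * sum_list (map g xs) = (\<Sum>x\<leftarrow>xs. a * g x)"
  by (simp add: sum_list_const_mult)
lemma mult_sum_list_right: "sum_list (map g xs) * (a::'a::ring_1) = (\<Sum>x\<leftarrow>xs. g x * a)"
  by (simp add: sum_list_mult_const)

lemma sum_cp_cmult: "(\<Sum>(a, b)\<leftarrow>xs. (c::complex) * G a b) = c * (\<Sum>(a, b)\<leftarrow>xs. G a b)"
  by (induct xs) (auto simp: distrib_left)
lemma sum_cp_multc: "(\<Sum>(a, b)\<leftarrow>xs. G a b * (c::complex)) = (\<Sum>(a, b)\<leftarrow>xs. G a b) * c"
  by (induct xs) (auto simp: distrib_right)
lemma sum_cp_add: "(\<Sum>(a, b)\<leftarrow>xs. F a b + G a b) = (\<Sum>(a, b)\<leftarrow>xs. F a b) + (\<Sum>(a, b)\<leftarrow>xs. (G a b :: 'c::comm_monoid_add))"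
  by (induct xs) (auto simp: algebra_simps)

lemma bilin_add1: "bilin G \<Longrightarrow> G (x + y) b = G x b + G y b" by (simp add: bilin_def clinear_def)
lemma bilin_add2: "bilin G \<Longrightarrow> G a (x + y) = G a x + G a y" by (simp add: bilin_def clinear_def)
lemma bilin_scale1: "bilin G \<Longrightarrow> G (c *\<^sub>C x) b = c * G x b" by (simp add: bilin_def clinear_def)
lemma bilin_scale2: "bilin G \<Longrightarrow> G a (c *\<^sub>C x) = c * G a x" by (simp add: bilin_def clinear_def)
lemma bilin_add1': "bilin G \<Longrightarrow> G (x + y) = (\<lambda>b. G x b + G y b)" by (rule ext, simp add: bilin_def clinear_def)
lemma bilin_scale1': "bilin G \<Longrightarrow> G (c *\<^sub>C x) = (\<lambda>b. c * G x b)" by (rule ext, simp add: bilin_def clinear_def)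
lemma bilinI: "(\<And>y. clinear (\<lambda>x. G x y)) \<Longrightarrow> (\<And>x. clinear (\<lambda>y. G x y)) \<Longrightarrow> bilin G"
  by (simp add: bilin_def)
lemma trilinI: "(\<And>y z. clinear (\<lambda>x. G x y z)) \<Longrightarrow> (\<And>x z. clinear (\<lambda>y. G x y z)) \<Longrightarrow> (\<And>x y. clinear (\<lambda>z. G x y z)) \<Longrightarrow> trilin G"
  by (simp add: trilin_def)
lemma clinearI: "(\<And>x y. f (x + y) = f x + f y) \<Longrightarrow> (\<And>c x. f (c *\<^sub>C x) = c * f x) \<Longrightarrow> clinear f"
  by (simp add: clinear_def)

lemma teq2D: "teq2 xs ys \<Longrightarrow> bilin f \<Longrightarrow> (\<Sum>(x, y)\<leftarrow>xs. f x y) = (\<Sum>(x, y)\<leftarrow>ys. f x y)"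
  by (simp add: teq2_def)
lemma teq3D: "teq3 xs ys \<Longrightarrow> trilin f \<Longrightarrow> (\<Sum>(x, y, z)\<leftarrow>xs. f x y z) = (\<Sum>(x, y, z)\<leftarrow>ys. f x y z)"
  by (simp add: teq3_def)
lemma teq2_refl[simp]: "teq2 xs xs" by (simp add: teq2_def)
lemma teq2_sym: "teq2 xs ys \<Longrightarrow> teq2 ys xs" by (simp add: teq2_def)
lemma teq2_trans: "teq2 xs ys \<Longrightarrow> teq2 ys zs \<Longrightarrow> teq2 xs zs" by (simp add: teq2_def)
lemma teq2_append: "teq2 xs ys \<Longrightarrow> teq2 xs' ys' \<Longrightarrow> teq2 (xs @ xs') (ys @ ys')" by (simp add: teq2_def)
lemma teq2I: "(\<And>f. bilin f \<Longrightarrow> (\<Sum>(x, y)\<leftarrow>xs. f x y) = (\<Sum>(x, y)\<leftarrow>ys. f x y)) \<Longrightarrow> teq2 xs ys"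
  by (simp add: teq2_def)

definition tlin :: "('x::complex_algebra_1 \<Rightarrow> ('a::complex_algebra_1 \<times> 'b::complex_algebra_1) list) \<Rightarrow> bool" where
  "tlin F \<longleftrightarrow> (\<forall>x y. teq2 (F (x + y)) (F x @ F y)) \<and>
     (\<forall>c x. teq2 (F (c *\<^sub>C x)) (map (\<lambda>(a, b). (c *\<^sub>C a, b)) (F x)))"

lemma tlin_add: "tlin F \<Longrightarrow> bilin G \<Longrightarrow> (\<Sum>(a, b)\<leftarrow>F (x + y). G a b) = (\<Sum>(a, b)\<leftarrow>F x. G a b) + (\<Sum>(a, b)\<leftarrow>F y. G a b)"
  unfolding tlin_def by (drule conjunct1, drule spec, drule spec, drule teq2D, assumption, simp)

lemma tlin_scale: "tlin F \<Longrightarrow> bilin G \<Longrightarrow> (\<Sum>(a, b)\<leftarrow>F (c *\<^sub>C x). G a b) = c * (\<Sum>(a, b)\<leftarrow>F x. G a b)"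
proof -
  assume t: "tlin F" and g: "bilin G"
  then have "teq2 (F (c *\<^sub>C x)) (map (\<lambda>(a, b). (c *\<^sub>C a, b)) (F x))" by (simp add: tlin_def)
  from teq2D[OF this g] have "(\<Sum>(a, b)\<leftarrow>F (c *\<^sub>C x). G a b) = (\<Sum>p\<leftarrow>F x. (case p of (a, b) \<Rightarrow> G (c *\<^sub>C a) b))"
    by (simp add: o_def case_prod_beta)
  also have "\<dots> = (\<Sum>p\<leftarrow>F x. c * (case p of (a, b) \<Rightarrow> G a b))"
    by (rule arg_cong[where f=sum_list], rule map_cong, simp, auto simp: bilin_scale1[OF g])
  also have "\<dots> = c * (\<Sum>(a, b)\<leftarrow>F x. G a b)" by (simp add: sum_list_const_mult)
  finally show ?thesis .
qed

lemma tlin_clinear: "tlin F \<Longrightarrow> bilin G \<Longrightarrow> clinear (\<lambda>x. \<Sum>(a, b)\<leftarrow>F x. G a b)"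
  by (rule clinearI) (simp_all add: tlin_add tlin_scale)


lemma sum_case_prod_cong: "(\<And>a b. (a, b) \<in> set xs \<Longrightarrow> f a b = g a b) \<Longrightarrow> (\<Sum>(a, b)\<leftarrow>xs. f a b) = (\<Sum>(a, b)\<leftarrow>xs. g a b)"
  by (rule arg_cong[where f=sum_list], rule map_cong, auto)

lemma sum_map_scale: "(\<Sum>(a, b)\<leftarrow>map (\<lambda>(a, b). (c *\<^sub>C a, b)) xs. G a b) = (\<Sum>(a, b)\<leftarrow>xs. G (c *\<^sub>C a) b)"
  by (induct xs) auto

lemma chi_sum: "(\<Sum>(p, q)\<leftarrow>chi \<delta> xs. g p q) = (\<Sum>(a', a)\<leftarrow>xs. \<Sum>(a0, h)\<leftarrow>\<delta> a. g (a' * a0) h)"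
  by (induct xs) (auto simp: chi_def o_def split_def)


lemma cl_sum: "(\<And>a b. clinear (\<lambda>x. G a b x)) \<Longrightarrow> clinear (\<lambda>x. \<Sum>(a, b)\<leftarrow>L. G a b x)"
  unfolding clinear_def by (induct L) (auto simp: algebra_simps)
lemma cl_sum1: "(\<And>a. clinear (\<lambda>x. G a x)) \<Longrightarrow> clinear (\<lambda>x. \<Sum>a\<leftarrow>L. G a x)"
  unfolding clinear_def by (induct L) (auto simp: algebra_simps)
lemma cl_multc: "clinear f \<Longrightarrow> clinear (\<lambda>x. f x * c)"
  unfolding clinear_def by (auto simp: algebra_simps)
lemma cl_cmult: "clinear f \<Longrightarrow> clinear (\<lambda>x. c * f x)"
  unfolding clinear_def by (auto simp: algebra_simps)
lemma cl_add: "clinear f \<Longrightarrow> clinear g \<Longrightarrow> clinear (\<lambda>x. f x + g x)"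
  unfolding clinear_def by (auto simp: algebra_simps)
lemma cl_lmult: "clinear f \<Longrightarrow> clinear (\<lambda>x. f (a * x))"
  unfolding clinear_def by (auto simp: algebra_simps scaleC_mult_right)
lemma cl_rmult: "clinear f \<Longrightarrow> clinear (\<lambda>x. f (x * b))"
  unfolding clinear_def by (auto simp: algebra_simps scaleC_mult_left)
lemma cl_b1: "bilin G \<Longrightarrow> clinear (\<lambda>x. G x y)" by (simp add: bilin_def)
lemma cl_b2: "bilin G \<Longrightarrow> clinear (G x)" by (simp add: bilin_def)
lemma cl_t1: "trilin G \<Longrightarrow> clinear (\<lambda>x. G x y z)" by (simp add: trilin_def)
lemma cl_t2: "trilin G \<Longrightarrow> clinear (\<lambda>y. G x y z)" by (simp add: trilin_def)
lemma cl_t3: "trilin G \<Longrightarrow> clinear (G x y)" by (simp add: trilin_def)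
lemma cl_tlin: "tlin F \<Longrightarrow> bilin G \<Longrightarrow> clinear (\<lambda>x. \<Sum>(a, b)\<leftarrow>F x. G a b)"
  by (rule tlin_clinear)


definition alin :: "('a::complex_algebra_1 \<Rightarrow> 'b::complex_algebra_1) \<Rightarrow> bool" where
  "alin g \<longleftrightarrow> (\<forall>x y. g (x + y) = g x + g y) \<and> (\<forall>c x. g (c *\<^sub>C x) = c *\<^sub>C g x)"
lemma alin_id: "alin (\<lambda>x. x)" by (simp add: alin_def)
lemma alin_lm: "alin g \<Longrightarrow> alin (\<lambda>x. a * g x)" by (simp add: alin_def distrib_left scaleC_mult_right)
lemma alin_rm: "alin g \<Longrightarrow> alin (\<lambda>x. g x * b)" by (simp add: alin_def distrib_right scaleC_mult_left)
lemma lc: "clinear f \<Longrightarrow> alin g \<Longrightarrow> clinear (\<lambda>x. f (g x))" by (simp add: alin_def clinear_def)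
lemma lb1: "bilin G \<Longrightarrow> alin g \<Longrightarrow> clinear (\<lambda>x. G (g x) y)" by (simp add: bilin_def alin_def clinear_def)
lemma lb2: "bilin G \<Longrightarrow> alin g \<Longrightarrow> clinear (\<lambda>x. G y (g x))" by (simp add: bilin_def alin_def clinear_def)
lemma lt1: "trilin G \<Longrightarrow> alin g \<Longrightarrow> clinear (\<lambda>x. G (g x) y z)" by (simp add: trilin_def alin_def clinear_def)
lemma lt2: "trilin G \<Longrightarrow> alin g \<Longrightarrow> clinear (\<lambda>x. G y (g x) z)" by (simp add: trilin_def alin_def clinear_def)
lemma lt3: "trilin G \<Longrightarrow> alin g \<Longrightarrow> clinear (\<lambda>x. G y z (g x))" by (simp add: trilin_def alin_def clinear_def)

named_theorems linI
declare cl_sum[linI] cl_sum1[linI] cl_multc[linI] cl_cmult[linI] cl_add[linI] bilinI[linI] trilinI[linI]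
  alin_id[linI] alin_lm[linI] alin_rm[linI]

locale GO =
  fixes \<Delta> :: "'h::complex_algebra_1 \<Rightarrow> ('h \<times> 'h) list"
    and \<epsilon> :: "'h \<Rightarrow> complex"
    and S :: "'h \<Rightarrow> 'h"
    and \<delta> :: "'a::complex_algebra_1 \<Rightarrow> ('a \<times> 'h) list"
  assumes hopf: "hopf_algebra \<Delta> \<epsilon> S"
    and gal: "galois_object \<Delta> \<epsilon> \<delta>"
begin

lemma tlin_Delta: "tlin \<Delta>" using hopf by (simp add: hopf_algebra_def tlin_def)
lemma tlin_delta: "tlin \<delta>" using gal by (simp add: galois_object_def comodule_algebra_def tlin_def)
lemma eps_lin: "clinear \<epsilon>" using hopf by (simp add: hopf_algebra_def)
lemma delta_counit: "(\<Sum>(a, h)\<leftarrow>\<delta> x. \<epsilon> h *\<^sub>C a) = x"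
  using gal by (simp add: galois_object_def comodule_algebra_def)
lemma chi_inj: "teq2 (chi \<delta> xs) (chi \<delta> ys) \<Longrightarrow> teq2 xs ys"
  using gal by (simp add: galois_object_def)
lemma chi_surj: "\<exists>xs. teq2 (chi \<delta> xs) zs"
  using gal by (simp add: galois_object_def)

lemma delta_mult: "bilin G \<Longrightarrow> (\<Sum>(a, h)\<leftarrow>\<delta> (x * y). G a h) = (\<Sum>(a, h)\<leftarrow>\<delta> x. \<Sum>(b, k)\<leftarrow>\<delta> y. G (a * b) (h * k))"
proof -
  assume g: "bilin G"
  have "teq2 (\<delta> (x * y)) (tmult (\<delta> x) (\<delta> y))"
    using gal by (simp add: galois_object_def comodule_algebra_def)
  from teq2D[OF this g] show ?thesis
    by (simp add: tmult_def sum_list_concat_map o_def split_def)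
qed

lemma delta_one: "bilin G \<Longrightarrow> (\<Sum>(a, h)\<leftarrow>\<delta> 1. G a h) = G 1 1"
proof -
  assume g: "bilin G"
  have "teq2 (\<delta> 1) [(1, 1)]"
    using gal by (simp add: galois_object_def comodule_algebra_def)
  from teq2D[OF this g] show ?thesis by simp
qed

lemma delta_coassoc: "trilin G \<Longrightarrow> (\<Sum>(a, h)\<leftarrow>\<delta> x. \<Sum>(b, k)\<leftarrow>\<delta> a. G b k h) = (\<Sum>(a, h)\<leftarrow>\<delta> x. \<Sum>(h1, h2)\<leftarrow>\<Delta> h. G a h1 h2)"
proof -
  assume g: "trilin G"
  have "teq3 (concat (map (\<lambda>(a, h). map (\<lambda>(b, k). (b, k, h)) (\<delta> a)) (\<delta> x)))
                (concat (map (\<lambda>(a, h). map (\<lambda>(h1, h2). (a, h1, h2)) (\<Delta> h)) (\<delta> x)))"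
    using gal by (simp add: galois_object_def comodule_algebra_def)
  from teq3D[OF this g] show ?thesis
    by (simp add: sum_list_concat_map o_def split_def)
qed

lemma tau_spec: "teq2 (chi \<delta> (tau \<delta> h)) [(1, h)]"
  unfolding tau_def using chi_surj[of "[(1, h)]"] by (rule someI_ex)

lemma G1: "bilin g \<Longrightarrow> (\<Sum>(t1, t2)\<leftarrow>tau \<delta> h. \<Sum>(e, j)\<leftarrow>\<delta> t2. g (t1 * e) j) = g 1 h"
  using teq2D[OF tau_spec, of g] by (simp add: chi_sum)

lemma chi_teq: "(\<And>g. bilin g \<Longrightarrow> (\<Sum>(a', a)\<leftarrow>xs. \<Sum>(a0, h)\<leftarrow>\<delta> a. g (a' * a0) h) = (\<Sum>(a', a)\<leftarrow>ys. \<Sum>(a0, h)\<leftarrow>\<delta> a. g (a' * a0) h)) \<Longrightarrow> teq2 xs ys"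
  by (rule chi_inj, rule teq2I, simp add: chi_sum)

lemma tlin_tau: "tlin (tau \<delta>)"
  unfolding tlin_def
proof (intro allI conjI)
  fix x y
  show "teq2 (tau \<delta> (x + y)) (tau \<delta> x @ tau \<delta> y)"
  proof (rule chi_teq)
    fix g :: "'a \<Rightarrow> 'h \<Rightarrow> complex" assume g: "bilin g"
    show "(\<Sum>(a', a)\<leftarrow>tau \<delta> (x + y). \<Sum>(a0, h)\<leftarrow>\<delta> a. g (a' * a0) h) = (\<Sum>(a', a)\<leftarrow>tau \<delta> x @ tau \<delta> y. \<Sum>(a0, h)\<leftarrow>\<delta> a. g (a' * a0) h)"
      using G1[OF g] by (simp add: bilin_add2[OF g])
  qed
next
  fix c x
  show "teq2 (tau \<delta> (c *\<^sub>C x)) (map (\<lambda>(a, b). (c *\<^sub>C a, b)) (tau \<delta> x))"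
  proof (rule chi_teq)
    fix g :: "'a \<Rightarrow> 'h \<Rightarrow> complex" assume g: "bilin g"
    have "(\<Sum>(a', a)\<leftarrow>map (\<lambda>(a, b). (c *\<^sub>C a, b)) (tau \<delta> x). \<Sum>(a0, h)\<leftarrow>\<delta> a. g (a' * a0) h)
       = (\<Sum>(a', a)\<leftarrow>tau \<delta> x. \<Sum>(a0, h)\<leftarrow>\<delta> a. c * g (a' * a0) h)"
      by (simp add: sum_map_scale scaleC_mult_left bilin_scale1'[OF g] del: map_map)
    also have "\<dots> = c * (\<Sum>(a', a)\<leftarrow>tau \<delta> x. \<Sum>(a0, h)\<leftarrow>\<delta> a. g (a' * a0) h)"
      by (simp add: sum_cp_cmult)
    finally show "(\<Sum>(a', a)\<leftarrow>tau \<delta> (c *\<^sub>C x). \<Sum>(a0, h)\<leftarrow>\<delta> a. g (a' * a0) h) = (\<Sum>(a', a)\<leftarrow>map (\<lambda>(a, b). (c *\<^sub>C a, b)) (tau \<delta> x). \<Sum>(a0, h)\<leftarrow>\<delta> a. g (a' * a0) h)"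
      using G1[OF g] by (simp add: bilin_scale2[OF g])
  qed
qed

lemma G2: "bilin g \<Longrightarrow> (\<Sum>(a0, h)\<leftarrow>\<delta> a. \<Sum>(t1, t2)\<leftarrow>tau \<delta> h. g (a0 * t1) t2) = g 1 a"
proof -
  assume g: "bilin g"
  have "teq2 (concat (map (\<lambda>(a0, h). map (\<lambda>(t1, t2). (a0 * t1, t2)) (tau \<delta> h)) (\<delta> a))) [(1, a)]"
  proof (rule chi_teq)
    fix g' :: "'a \<Rightarrow> 'h \<Rightarrow> complex" assume g': "bilin g'"
    have "(\<Sum>(a', b)\<leftarrow>concat (map (\<lambda>(a0, h). map (\<lambda>(t1, t2). (a0 * t1, t2)) (tau \<delta> h)) (\<delta> a)). \<Sum>(e, j)\<leftarrow>\<delta> b. g' (a' * e) j)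
      = (\<Sum>(a0, h)\<leftarrow>\<delta> a. \<Sum>(t1, t2)\<leftarrow>tau \<delta> h. \<Sum>(e, j)\<leftarrow>\<delta> t2. (\<lambda>x j. g' (a0 * x) j) (t1 * e) j)"
      by (simp add: sum_list_concat_map o_def split_def mult.assoc)
    also have "\<dots> = (\<Sum>(a0, h)\<leftarrow>\<delta> a. (\<lambda>x j. g' (a0 * x) j) 1 h)"
      by (rule sum_case_prod_cong, rule G1, rule bilinI, rule cl_lmult, rule cl_b1, rule g', rule cl_b2, rule g')
    finally show "(\<Sum>(a', b)\<leftarrow>concat (map (\<lambda>(a0, h). map (\<lambda>(t1, t2). (a0 * t1, t2)) (tau \<delta> h)) (\<delta> a)). \<Sum>(e, j)\<leftarrow>\<delta> b. g' (a' * e) j)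
       = (\<Sum>(a', b)\<leftarrow>[(1, a)]. \<Sum>(e, j)\<leftarrow>\<delta> b. g' (a' * e) j)" by simp
  qed
  from teq2D[OF this g] show ?thesis by (simp add: sum_list_concat_map o_def split_def)
qed

lemma G2': "bilin g \<Longrightarrow> (\<Sum>(a0, h)\<leftarrow>\<delta> a. \<Sum>(t1, t2)\<leftarrow>tau \<delta> h. g (x * a0 * t1) t2) = g x a"
proof -
  assume g: "bilin g"
  have b: "bilin (\<lambda>p q. g (x * p) q)" by (rule bilinI, rule cl_lmult, rule cl_b1, rule g, rule cl_b2, rule g)
  show ?thesis using G2[OF b, of a] by (simp add: mult.assoc)
qed

lemma tau_one: "bilin g \<Longrightarrow> (\<Sum>(t1, t2)\<leftarrow>tau \<delta> 1. g t1 t2) = g 1 1"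
proof -
  assume g: "bilin g"
  have "teq2 (tau \<delta> 1) [(1, 1)]"
  proof (rule chi_teq)
    fix g' :: "'a \<Rightarrow> 'h \<Rightarrow> complex" assume g': "bilin g'"
    show "(\<Sum>(a', a)\<leftarrow>tau \<delta> 1. \<Sum>(a0, h)\<leftarrow>\<delta> a. g' (a' * a0) h) = (\<Sum>(a', a)\<leftarrow>[(1, 1)]. \<Sum>(a0, h)\<leftarrow>\<delta> a. g' (a' * a0) h)"
      using G1[OF g', of 1] delta_one[OF g'] by simp
  qed
  from teq2D[OF this g] show ?thesis by simp
qed

lemma G3: "clinear l \<Longrightarrow> (\<Sum>(t1, t2)\<leftarrow>tau \<delta> h. l (t1 * t2)) = \<epsilon> h * l 1"
proof -
  assume l: "clinear l"
  have b: "bilin (\<lambda>a j. \<epsilon> j * l a)"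
    by (rule bilinI, rule cl_cmult, rule l, rule cl_multc, rule eps_lin)
  have "(\<Sum>(t1, t2)\<leftarrow>tau \<delta> h. l (t1 * t2)) = (\<Sum>(t1, t2)\<leftarrow>tau \<delta> h. \<Sum>(e, j)\<leftarrow>\<delta> t2. (\<lambda>a j. \<epsilon> j * l a) (t1 * e) j)"
  proof (rule sum_case_prod_cong)
    fix t1 t2
    have "l (t1 * t2) = l (t1 * (\<Sum>(e, j)\<leftarrow>\<delta> t2. \<epsilon> j *\<^sub>C e))" by (simp add: delta_counit)
    also have "\<dots> = l (\<Sum>(e, j)\<leftarrow>\<delta> t2. \<epsilon> j *\<^sub>C (t1 * e))"
      by (simp add: split_def mult_sum_list_left scaleC_mult_right)
    also have "\<dots> = (\<Sum>(e, j)\<leftarrow>\<delta> t2. \<epsilon> j * l (t1 * e))"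
      by (simp add: split_def clinear_sum_list[OF l] clinear_scale[OF l])
    finally show "l (t1 * t2) = (\<Sum>(e, j)\<leftarrow>\<delta> t2. (\<lambda>a j. \<epsilon> j * l a) (t1 * e) j)" by simp
  qed
  also have "\<dots> = \<epsilon> h * l 1" using G1[OF b] by simp
  finally show ?thesis .
qed

lemma cl_delta[linI]: "bilin G \<Longrightarrow> clinear (\<lambda>x. \<Sum>(a, b)\<leftarrow>\<delta> x. G a b)" by (rule cl_tlin[OF tlin_delta])
lemma cl_Delta[linI]: "bilin G \<Longrightarrow> clinear (\<lambda>x. \<Sum>(a, b)\<leftarrow>\<Delta> x. G a b)" by (rule cl_tlin[OF tlin_Delta])
lemma cl_tau[linI]: "bilin G \<Longrightarrow> clinear (\<lambda>x. \<Sum>(a, b)\<leftarrow>tau \<delta> x. G a b)" by (rule cl_tlin[OF tlin_tau])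
declare eps_lin[linI]


end



abbreviation lS :: "('x \<times> 'y) list \<Rightarrow> ('x \<Rightarrow> 'y \<Rightarrow> 'z::comm_monoid_add) \<Rightarrow> 'z" where
  "lS xs F \<equiv> sum_list (map (case_prod F) xs)"

lemma swap: "lS L (\<lambda>a b. lS M (\<lambda>c d. F a b c d)) = lS M (\<lambda>c d. lS L (\<lambda>a b. (F a b c d :: 'z::comm_monoid_add)))"
proof (induct L)
  case (Cons p L) then show ?case by (cases p) (simp add: sum_cp_add)
qed simp

lemma swap2: "lS L (\<lambda>a b. lS (M a b) (\<lambda>c d. lS N (\<lambda>e g. F a b c d e g))) = lS N (\<lambda>e g. lS L (\<lambda>a b. lS (M a b) (\<lambda>c d. (F a b c d e g :: 'z::comm_monoid_add))))"
proof -
  have "lS L (\<lambda>a b. lS (M a b) (\<lambda>c d. lS N (\<lambda>e g. F a b c d e g))) = lS L (\<lambda>a b. lS N (\<lambda>e g. lS (M a b) (\<lambda>c d. F a b c d e g)))"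
    by (rule sum_case_prod_cong, rule swap)
  also have "\<dots> = lS N (\<lambda>e g. lS L (\<lambda>a b. lS (M a b) (\<lambda>c d. F a b c d e g)))" by (rule swap)
  finally show ?thesis .
qed

definition lin6 :: "('a::complex_algebra_1 \<Rightarrow> 'a \<Rightarrow> 'a \<Rightarrow> 'a \<Rightarrow> 'a \<Rightarrow> 'a \<Rightarrow> complex) \<Rightarrow> bool" where
  "lin6 G \<longleftrightarrow> (\<forall>b c d e g. clinear (\<lambda>x. G x b c d e g)) \<and> (\<forall>a c d e g. clinear (\<lambda>x. G a x c d e g))
     \<and> (\<forall>a b d e g. clinear (\<lambda>x. G a b x d e g)) \<and> (\<forall>a b c e g. clinear (\<lambda>x. G a b c x e g))
     \<and> (\<forall>a b c d g. clinear (\<lambda>x. G a b c d x g)) \<and> (\<forall>a b c d e. clinear (\<lambda>x. G a b c d e x))"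

lemma l6_1: "lin6 G \<Longrightarrow> alin h \<Longrightarrow> clinear (\<lambda>x. G (h x) b c d e g)" by (simp add: lin6_def alin_def clinear_def)
lemma l6_2: "lin6 G \<Longrightarrow> alin h \<Longrightarrow> clinear (\<lambda>x. G a (h x) c d e g)" by (simp add: lin6_def alin_def clinear_def)
lemma l6_3: "lin6 G \<Longrightarrow> alin h \<Longrightarrow> clinear (\<lambda>x. G a b (h x) d e g)" by (simp add: lin6_def alin_def clinear_def)
lemma l6_4: "lin6 G \<Longrightarrow> alin h \<Longrightarrow> clinear (\<lambda>x. G a b c (h x) e g)" by (simp add: lin6_def alin_def clinear_def)
lemma l6_5: "lin6 G \<Longrightarrow> alin h \<Longrightarrow> clinear (\<lambda>x. G a b c d (h x) g)" by (simp add: lin6_def alin_def clinear_def)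
lemma l6_6: "lin6 G \<Longrightarrow> alin h \<Longrightarrow> clinear (\<lambda>x. G a b c d e (h x))" by (simp add: lin6_def alin_def clinear_def)
lemma lin6I: "(\<And>b c d e g. clinear (\<lambda>x. G x b c d e g)) \<Longrightarrow> (\<And>a c d e g. clinear (\<lambda>x. G a x c d e g))
     \<Longrightarrow> (\<And>a b d e g. clinear (\<lambda>x. G a b x d e g)) \<Longrightarrow> (\<And>a b c e g. clinear (\<lambda>x. G a b c x e g))
     \<Longrightarrow> (\<And>a b c d g. clinear (\<lambda>x. G a b c d x g)) \<Longrightarrow> (\<And>a b c d e. clinear (\<lambda>x. G a b c d e x)) \<Longrightarrow> lin6 G"
  by (simp add: lin6_def)

context GO begin

lemma cl_tau2[linI]: "alin g \<Longrightarrow> bilin G \<Longrightarrow> clinear (\<lambda>x. \<Sum>(a, b)\<leftarrow>tau \<delta> (g x). G a b)"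
  unfolding clinear_def by (simp add: alin_def tlin_add[OF tlin_tau] tlin_scale[OF tlin_tau])
lemma cl_delta2[linI]: "alin g \<Longrightarrow> bilin G \<Longrightarrow> clinear (\<lambda>x. \<Sum>(a, b)\<leftarrow>\<delta> (g x). G a b)"
  unfolding clinear_def by (simp add: alin_def tlin_add[OF tlin_delta] tlin_scale[OF tlin_delta])

lemma G4: "trilin \<Gamma> \<Longrightarrow> (\<Sum>(t1, t2)\<leftarrow>tau \<delta> h. \<Sum>(e, j)\<leftarrow>\<delta> t2. \<Gamma> t1 e j) = (\<Sum>(h1, h2)\<leftarrow>\<Delta> h. \<Sum>(t1, t2)\<leftarrow>tau \<delta> h1. \<Gamma> t1 t2 h2)"
proof -
  assume G: "trilin \<Gamma>"
  have "(\<Sum>(t1, t2)\<leftarrow>tau \<delta> h. \<Sum>(e, j)\<leftarrow>\<delta> t2. \<Gamma> t1 e j)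
     = (\<Sum>(t1, t2)\<leftarrow>tau \<delta> h. \<Sum>(e, j)\<leftarrow>\<delta> t2. \<Sum>(e0, e1)\<leftarrow>\<delta> e. \<Sum>(q1, q2)\<leftarrow>tau \<delta> e1. \<Gamma> (t1 * e0 * q1) q2 j)"
    apply (rule sum_case_prod_cong)+
    apply (rule G2'[of "\<lambda>p q. \<Gamma> p q _", symmetric])
    by (intro linI lt1[OF G] lt2[OF G] lt3[OF G])
  also have "\<dots> = (\<Sum>(t1, t2)\<leftarrow>tau \<delta> h. \<Sum>(e, j)\<leftarrow>\<delta> t2. \<Sum>(j1, j2)\<leftarrow>\<Delta> j. \<Sum>(q1, q2)\<leftarrow>tau \<delta> j1. \<Gamma> (t1 * e * q1) q2 j2)"
    apply (rule sum_case_prod_cong)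
    apply (rule delta_coassoc[where G="\<lambda>e0 e1 j. \<Sum>(q1, q2)\<leftarrow>tau \<delta> e1. \<Gamma> (_ * e0 * q1) q2 j"])
    by (intro linI lt1[OF G] lt2[OF G] lt3[OF G])
  also have "\<dots> = (\<Sum>(j1, j2)\<leftarrow>\<Delta> h. \<Sum>(q1, q2)\<leftarrow>tau \<delta> j1. \<Gamma> (1 * q1) q2 j2)"
    apply (rule G1[where g="\<lambda>a j. \<Sum>(j1, j2)\<leftarrow>\<Delta> j. \<Sum>(q1, q2)\<leftarrow>tau \<delta> j1. \<Gamma> (a * q1) q2 j2"])
    by (intro linI lt1[OF G] lt2[OF G] lt3[OF G])
  finally show ?thesis by simp
qed

lemma CI: "w \<in> esC \<delta> \<Longrightarrow> trilin \<Phi> \<Longrightarrow>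
   lS w (\<lambda>u v. lS (\<delta> u) (\<lambda>u' h. lS (\<delta> v) (\<lambda>v' k. \<Phi> u' v' (h * k)))) = lS w (\<lambda>u v. \<Phi> u v 1)"
proof -
  assume w: "w \<in> esC \<delta>" and P: "trilin \<Phi>"
  from w have "teq3
      (concat (map (\<lambda>(a, b). concat (map (\<lambda>(a0, h). map (\<lambda>(b0, k). (a0, b0, h * k)) (\<delta> b)) (\<delta> a))) w))
      (map (\<lambda>(a, b). (a, b, 1)) w)" by (simp add: esC_def)
  from teq3D[OF this P] show ?thesis
    by (simp add: sum_list_concat_map o_def split_def)
qed

lemma A1:
  assumes G: "lin6 \<Gamma>" and w: "w \<in> esC \<delta>"
  shows "lS w (\<lambda>u v. lS (\<delta> u) (\<lambda>u0 h. lS (tau \<delta> h) (\<lambda>t1 t2. lS (\<delta> v) (\<lambda>v0 k. lS (tau \<delta> k) (\<lambda>s1 s2. \<Gamma> u0 t1 v0 s1 1 (t2 * s2))))))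
       = lS w (\<lambda>u v. lS (\<delta> u) (\<lambda>u0 h. lS (tau \<delta> h) (\<lambda>t1 t2. lS (\<delta> v) (\<lambda>v0 k. lS (tau \<delta> k) (\<lambda>s1 s2. \<Gamma> u0 t1 v0 s1 (t2 * s2) 1)))))"
    (is "?E0 = ?E10")
proof -
  have "?E0 = lS w (\<lambda>u v. lS (\<delta> u) (\<lambda>u0 h. lS (tau \<delta> h) (\<lambda>t1 t2. lS (\<delta> v) (\<lambda>v0 k. lS (tau \<delta> k) (\<lambda>s1 s2.
      lS (\<delta> (t2 * s2)) (\<lambda>z m. lS (tau \<delta> m) (\<lambda>r1 r2. \<Gamma> u0 t1 v0 s1 (z * r1) r2)))))))"
    apply (intro sum_case_prod_cong)
    apply (rule G2[where g="\<lambda>p q. \<Gamma> _ _ _ _ p q", symmetric, simplified])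
    by (intro linI l6_1[OF G] l6_2[OF G] l6_3[OF G] l6_4[OF G] l6_5[OF G] l6_6[OF G])
  also have "\<dots> = lS w (\<lambda>u v. lS (\<delta> u) (\<lambda>u0 h. lS (tau \<delta> h) (\<lambda>t1 t2. lS (\<delta> v) (\<lambda>v0 k. lS (tau \<delta> k) (\<lambda>s1 s2.
      lS (\<delta> t2) (\<lambda>e j. lS (\<delta> s2) (\<lambda>d l. lS (tau \<delta> (j * l)) (\<lambda>r1 r2. \<Gamma> u0 t1 v0 s1 (e * d * r1) r2))))))))"
    apply (intro sum_case_prod_cong)
    apply (rule delta_mult[where G="\<lambda>z m. lS (tau \<delta> m) (\<lambda>r1 r2. \<Gamma> _ _ _ _ (z * r1) r2)"])
    by (intro linI l6_1[OF G] l6_2[OF G] l6_3[OF G] l6_4[OF G] l6_5[OF G] l6_6[OF G])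

  also have "\<dots> = lS (w) (\<lambda>u v. lS (\<delta> u) (\<lambda>u0 h. lS (tau \<delta> h) (\<lambda>t1 t2. lS (\<delta> t2) (\<lambda>e j. lS (\<delta> v) (\<lambda>v0 k. lS (tau \<delta> k) (\<lambda>s1 s2. lS (\<delta> s2) (\<lambda>d l. lS (tau \<delta> (j * l)) (\<lambda>r1 r2. \<Gamma> u0 t1 v0 s1 (e * d * r1) r2))))))))"
    apply (intro sum_case_prod_cong)
    by (rule swap2)
  also have "\<dots> = lS (w) (\<lambda>u v. lS (\<delta> u) (\<lambda>u0 h. lS (\<Delta> h) (\<lambda>h1 h2. lS (tau \<delta> h1) (\<lambda>t1 t2. lS (\<delta> v) (\<lambda>v0 k. lS (tau \<delta> k) (\<lambda>s1 s2. lS (\<delta> s2) (\<lambda>d l. lS (tau \<delta> (h2 * l)) (\<lambda>r1 r2. \<Gamma> u0 t1 v0 s1 (t2 * d * r1) r2))))))))"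
    apply (intro sum_case_prod_cong)
    apply (rule G4)
    by (intro linI l6_1[OF G] l6_2[OF G] l6_3[OF G] l6_4[OF G] l6_5[OF G] l6_6[OF G])
  also have "\<dots> = lS (w) (\<lambda>u v. lS (\<delta> u) (\<lambda>u0 h. lS (\<Delta> h) (\<lambda>h1 h2. lS (tau \<delta> h1) (\<lambda>t1 t2. lS (\<delta> v) (\<lambda>v0 k. lS (\<Delta> k) (\<lambda>k1 k2. lS (tau \<delta> k1) (\<lambda>s1 s2. lS (tau \<delta> (h2 * k2)) (\<lambda>r1 r2. \<Gamma> u0 t1 v0 s1 (t2 * s2 * r1) r2))))))))"
    apply (intro sum_case_prod_cong)
    apply (rule G4)
    by (intro linI l6_1[OF G] l6_2[OF G] l6_3[OF G] l6_4[OF G] l6_5[OF G] l6_6[OF G])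
  also have "\<dots> = lS (w) (\<lambda>u v. lS (\<delta> u) (\<lambda>u' h. lS (\<delta> u') (\<lambda>u0 h1. lS (tau \<delta> h1) (\<lambda>t1 t2. lS (\<delta> v) (\<lambda>v0 k. lS (\<Delta> k) (\<lambda>k1 k2. lS (tau \<delta> k1) (\<lambda>s1 s2. lS (tau \<delta> (h * k2)) (\<lambda>r1 r2. \<Gamma> u0 t1 v0 s1 (t2 * s2 * r1) r2))))))))"
    apply (rule sum_case_prod_cong)
    apply (rule delta_coassoc[symmetric])
    by (intro linI l6_1[OF G] l6_2[OF G] l6_3[OF G] l6_4[OF G] l6_5[OF G] l6_6[OF G])
  also have "\<dots> = lS (w) (\<lambda>u v. lS (\<delta> u) (\<lambda>u' h. lS (\<delta> u') (\<lambda>u0 h1. lS (tau \<delta> h1) (\<lambda>t1 t2. lS (\<delta> v) (\<lambda>v' k. lS (\<delta> v') (\<lambda>v0 k1. lS (tau \<delta> k1) (\<lambda>s1 s2. lS (tau \<delta> (h * k)) (\<lambda>r1 r2. \<Gamma> u0 t1 v0 s1 (t2 * s2 * r1) r2))))))))"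
    apply (rule sum_case_prod_cong, rule sum_case_prod_cong, rule sum_case_prod_cong, rule sum_case_prod_cong)
    apply (rule delta_coassoc[symmetric])
    by (intro linI l6_1[OF G] l6_2[OF G] l6_3[OF G] l6_4[OF G] l6_5[OF G] l6_6[OF G])
  also have "\<dots> = lS (w) (\<lambda>u v. lS (\<delta> u) (\<lambda>u' h. lS (\<delta> v) (\<lambda>v' k. lS (\<delta> u') (\<lambda>u0 h1. lS (tau \<delta> h1) (\<lambda>t1 t2. lS (\<delta> v') (\<lambda>v0 k1. lS (tau \<delta> k1) (\<lambda>s1 s2. lS (tau \<delta> (h * k)) (\<lambda>r1 r2. \<Gamma> u0 t1 v0 s1 (t2 * s2 * r1) r2))))))))"
    apply (intro sum_case_prod_cong)
    by (rule swap2)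
  also have "\<dots> = lS (w) (\<lambda>u v. lS (\<delta> u) (\<lambda>u0 h1. lS (tau \<delta> h1) (\<lambda>t1 t2. lS (\<delta> v) (\<lambda>v0 k1. lS (tau \<delta> k1) (\<lambda>s1 s2. lS (tau \<delta> 1) (\<lambda>r1 r2. \<Gamma> u0 t1 v0 s1 (t2 * s2 * r1) r2))))))"
    apply (rule CI[OF w, where \<Phi>="\<lambda>u' v' m. lS (\<delta> u') (\<lambda>u0 h1. lS (tau \<delta> h1) (\<lambda>t1 t2. lS (\<delta> v') (\<lambda>v0 k1. lS (tau \<delta> k1) (\<lambda>s1 s2. lS (tau \<delta> m) (\<lambda>r1 r2. \<Gamma> u0 t1 v0 s1 (t2 * s2 * r1) r2)))))"])
    by (intro linI l6_1[OF G] l6_2[OF G] l6_3[OF G] l6_4[OF G] l6_5[OF G] l6_6[OF G])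
  also have "\<dots> = ?E10"
    apply (intro sum_case_prod_cong)
    apply (subst tau_one)
    by (intro linI l6_1[OF G] l6_2[OF G] l6_3[OF G] l6_4[OF G] l6_5[OF G] l6_6[OF G], simp)
  finally show ?thesis .
qed

lemma lin_lS: "clinear M \<Longrightarrow> M (lS L (\<lambda>a h. c a h *\<^sub>C g a h)) = lS L (\<lambda>a h. c a h * M (g a h))"
proof (induct L)
  case Nil then show ?case by (simp add: clinear_0)
next
  case (Cons p L) then show ?case by (cases p) (simp add: clinear_add clinear_scale)
qed

lemma counit_lin: "clinear M \<Longrightarrow> lS (\<delta> u) (\<lambda>u0 h. \<epsilon> h * M u0) = M u"
  using lin_lS[where M=M and L="\<delta> u" and c="\<lambda>a h. \<epsilon> h" and g="\<lambda>a h. a"] delta_counit[of u] by simp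

lemma stageA:
  assumes b: "bilin \<beta>" and b11: "\<beta> 1 1 = 1" and f: "bilin f" and w: "w \<in> esC \<delta>"
  shows "lS w (\<lambda>u v. lS (\<delta> u) (\<lambda>u0 h. lS (tau \<delta> h) (\<lambda>t1 t2. lS (\<delta> v) (\<lambda>v0 k. lS (tau \<delta> k) (\<lambda>s1 s2. \<beta> v0 (s1 * t2 * s2) * f u0 t1)))))
       = lS w (\<lambda>u v. lS (\<delta> v) (\<lambda>v0 k. lS (tau \<delta> k) (\<lambda>s1 s2. \<beta> v0 s1 * f u s2)))"
proof -
  define \<Gamma>1 where "\<Gamma>1 = (\<lambda>u0 t1 v0 s1 a b. f u0 t1 * \<beta> v0 (s1 * b) * \<beta> a (1::'a))"
  define \<Gamma>2 where "\<Gamma>2 = (\<lambda>u0 t1 v0 s1 a b. f u0 (t1 * b) * \<beta> v0 s1 * \<beta> a (1::'a))"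
  have l1: "lin6 \<Gamma>1" unfolding \<Gamma>1_def by (rule lin6I; intro linI lb1[OF b] lb2[OF b] lb1[OF f] lb2[OF f])
  have l2: "lin6 \<Gamma>2" unfolding \<Gamma>2_def by (rule lin6I; intro linI lb1[OF b] lb2[OF b] lb1[OF f] lb2[OF f])
  have "lS w (\<lambda>u v. lS (\<delta> u) (\<lambda>u0 h. lS (tau \<delta> h) (\<lambda>t1 t2. lS (\<delta> v) (\<lambda>v0 k. lS (tau \<delta> k) (\<lambda>s1 s2. \<beta> v0 (s1 * t2 * s2) * f u0 t1)))))
     = lS w (\<lambda>u v. lS (\<delta> u) (\<lambda>u0 h. lS (tau \<delta> h) (\<lambda>t1 t2. lS (\<delta> v) (\<lambda>v0 k. lS (tau \<delta> k) (\<lambda>s1 s2. \<Gamma>1 u0 t1 v0 s1 1 (t2 * s2))))))"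
    by (intro sum_case_prod_cong) (simp add: \<Gamma>1_def b11 mult.assoc mult.commute)
  also have "\<dots> = lS w (\<lambda>u v. lS (\<delta> u) (\<lambda>u0 h. lS (tau \<delta> h) (\<lambda>t1 t2. lS (\<delta> v) (\<lambda>v0 k. lS (tau \<delta> k) (\<lambda>s1 s2. \<Gamma>1 u0 t1 v0 s1 (t2 * s2) 1)))))"
    by (rule A1[OF l1 w])
  also have "\<dots> = lS w (\<lambda>u v. lS (\<delta> u) (\<lambda>u0 h. lS (tau \<delta> h) (\<lambda>t1 t2. lS (\<delta> v) (\<lambda>v0 k. lS (tau \<delta> k) (\<lambda>s1 s2. \<Gamma>2 u0 t1 v0 s1 (t2 * s2) 1)))))"
    by (intro sum_case_prod_cong) (simp add: \<Gamma>1_def \<Gamma>2_def)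
  also have "\<dots> = lS w (\<lambda>u v. lS (\<delta> u) (\<lambda>u0 h. lS (tau \<delta> h) (\<lambda>t1 t2. lS (\<delta> v) (\<lambda>v0 k. lS (tau \<delta> k) (\<lambda>s1 s2. \<Gamma>2 u0 t1 v0 s1 1 (t2 * s2))))))"
    by (rule A1[OF l2 w, symmetric])
  also have "\<dots> = lS w (\<lambda>u v. lS (\<delta> u) (\<lambda>u0 h. lS (tau \<delta> h) (\<lambda>t1 t2. (\<lambda>a. lS (\<delta> v) (\<lambda>v0 k. lS (tau \<delta> k) (\<lambda>s1 s2. f u0 (a * s2) * \<beta> v0 s1))) (t1 * t2))))"
    by (intro sum_case_prod_cong) (simp add: \<Gamma>2_def b11 mult.assoc)
  also have "\<dots> = lS w (\<lambda>u v. lS (\<delta> u) (\<lambda>u0 h. \<epsilon> h * (\<lambda>a. lS (\<delta> v) (\<lambda>v0 k. lS (tau \<delta> k) (\<lambda>s1 s2. f u0 (a * s2) * \<beta> v0 s1))) 1))"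
    apply (intro sum_case_prod_cong)
    apply (rule G3[where l="\<lambda>a. lS (\<delta> _) (\<lambda>v0 k. lS (tau \<delta> k) (\<lambda>s1 s2. f _ (a * s2) * \<beta> v0 s1))"])
    by (intro linI lb1[OF b] lb2[OF b] lb1[OF f] lb2[OF f])
  also have "\<dots> = lS w (\<lambda>u v. (\<lambda>u0. lS (\<delta> v) (\<lambda>v0 k. lS (tau \<delta> k) (\<lambda>s1 s2. f u0 s2 * \<beta> v0 s1))) u)"
    apply (intro sum_case_prod_cong)
    apply simp
    apply (rule counit_lin)
    by (intro linI lb1[OF b] lb2[OF b] lb1[OF f] lb2[OF f])
  also have "\<dots> = lS w (\<lambda>u v. lS (\<delta> v) (\<lambda>v0 k. lS (tau \<delta> k) (\<lambda>s1 s2. \<beta> v0 s1 * f u s2)))"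
    by (intro sum_case_prod_cong) (simp add: mult.commute)
  finally show ?thesis .
qed

lemma teq3I: "(\<And>f. trilin f \<Longrightarrow> (\<Sum>(x, y, z)\<leftarrow>xs. f x y z) = (\<Sum>(x, y, z)\<leftarrow>ys. f x y z)) \<Longrightarrow> teq3 xs ys"
  by (simp add: teq3_def)

definition Wl where "Wl \<beta> c = concat (map (\<lambda>(x, y). concat (map (\<lambda>(x0, h). map (\<lambda>(t1, t2). (\<beta> x0 t1 *\<^sub>C t2, y)) (tau \<delta> h)) (\<delta> x))) c)"

lemma lS_Wl: "lS (Wl \<beta> c) F = lS c (\<lambda>x y. lS (\<delta> x) (\<lambda>x0 h. lS (tau \<delta> h) (\<lambda>t1 t2. F (\<beta> x0 t1 *\<^sub>C t2) y)))"
  by (simp add: Wl_def sum_list_concat_map o_def split_def)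

lemma W_esC:
  assumes c: "c \<in> esC \<delta>" and b: "bilin \<beta>"
  shows "Wl \<beta> c \<in> esC \<delta>"
  unfolding esC_def mem_Collect_eq
proof (rule teq3I)
  fix \<Phi> :: "'a \<Rightarrow> 'a \<Rightarrow> 'h \<Rightarrow> complex" assume P: "trilin \<Phi>"
  have e1: "(\<Sum>(x, y, z)\<leftarrow>concat (map (\<lambda>(a, b). concat (map (\<lambda>(a0, h). map (\<lambda>(b0, k). (a0, b0, h * k)) (\<delta> b)) (\<delta> a))) (Wl \<beta> c)). \<Phi> x y z)
     = lS (Wl \<beta> c) (\<lambda>a b. lS (\<delta> a) (\<lambda>a0 h. lS (\<delta> b) (\<lambda>b0 k. \<Phi> a0 b0 (h * k))))"
    by (simp add: sum_list_concat_map o_def split_def)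
  have e2: "(\<Sum>(x, y, z)\<leftarrow>map (\<lambda>(a, b). (a, b, 1)) (Wl \<beta> c). \<Phi> x y z) = lS (Wl \<beta> c) (\<lambda>a b. \<Phi> a b 1)"
    by (simp add: o_def split_def)
  have "lS (Wl \<beta> c) (\<lambda>a b. lS (\<delta> a) (\<lambda>a0 h. lS (\<delta> b) (\<lambda>b0 k. \<Phi> a0 b0 (h * k))))
     = lS c (\<lambda>x y. lS (\<delta> x) (\<lambda>x0 h. lS (tau \<delta> h) (\<lambda>t1 t2. lS (\<delta> (\<beta> x0 t1 *\<^sub>C t2)) (\<lambda>a0 h. lS (\<delta> y) (\<lambda>b0 k. \<Phi> a0 b0 (h * k))))))"
    by (rule lS_Wl)
  also have "\<dots> = lS c (\<lambda>x y. lS (\<delta> x) (\<lambda>x0 h. lS (tau \<delta> h) (\<lambda>t1 t2. \<beta> x0 t1 * lS (\<delta> t2) (\<lambda>e j. lS (\<delta> y) (\<lambda>b0 k. \<Phi> e b0 (j * k))))))"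
    apply (intro sum_case_prod_cong)
    apply (rule tlin_scale[OF tlin_delta])
    by (intro linI lt1[OF P] lt2[OF P] lt3[OF P] lb1[OF b] lb2[OF b])
  also have "\<dots> = lS c (\<lambda>x y. lS (\<delta> x) (\<lambda>x0 h. lS (\<Delta> h) (\<lambda>h1 h2. lS (tau \<delta> h1) (\<lambda>t1 t2. \<beta> x0 t1 * lS (\<delta> y) (\<lambda>b0 k. \<Phi> t2 b0 (h2 * k))))))"
    apply (intro sum_case_prod_cong)
    apply (subst sum_cp_cmult[symmetric])
    apply (rule G4)
    by (intro linI lt1[OF P] lt2[OF P] lt3[OF P] lb1[OF b] lb2[OF b])
  also have "\<dots> = lS c (\<lambda>x y. lS (\<delta> x) (\<lambda>x' h. lS (\<delta> x') (\<lambda>x0 h1. lS (tau \<delta> h1) (\<lambda>t1 t2. lS (\<delta> y) (\<lambda>b0 k. \<beta> x0 t1 * \<Phi> t2 b0 (h * k))))))"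
    apply (rule sum_case_prod_cong)
    apply (rule trans[OF delta_coassoc[symmetric]])
    apply (intro linI lt1[OF P] lt2[OF P] lt3[OF P] lb1[OF b] lb2[OF b])
    by (simp add: sum_cp_cmult)
  also have "\<dots> = lS c (\<lambda>x y. lS (\<delta> x) (\<lambda>x' h. lS (\<delta> y) (\<lambda>b0 k. lS (\<delta> x') (\<lambda>x0 h1. lS (tau \<delta> h1) (\<lambda>t1 t2. \<beta> x0 t1 * \<Phi> t2 b0 (h * k))))))"
    apply (intro sum_case_prod_cong)
    by (rule swap2)
  also have "\<dots> = lS c (\<lambda>x y. lS (\<delta> x) (\<lambda>x0 h1. lS (tau \<delta> h1) (\<lambda>t1 t2. \<beta> x0 t1 * \<Phi> t2 y 1)))"
    apply (rule CI[OF c, where \<Phi>="\<lambda>x' b0 m. lS (\<delta> x') (\<lambda>x0 h1. lS (tau \<delta> h1) (\<lambda>t1 t2. \<beta> x0 t1 * \<Phi> t2 b0 m))"])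
    by (intro linI lt1[OF P] lt2[OF P] lt3[OF P] lb1[OF b] lb2[OF b])
  also have "\<dots> = lS (Wl \<beta> c) (\<lambda>a b. \<Phi> a b 1)"
    by (simp add: lS_Wl cl_t1[OF P, THEN clinear_scale])
  finally show "(\<Sum>(x, y, z)\<leftarrow>concat (map (\<lambda>(a, b). concat (map (\<lambda>(a0, h). map (\<lambda>(b0, k). (a0, b0, h * k)) (\<delta> b)) (\<delta> a))) (Wl \<beta> c)). \<Phi> x y z)
     = (\<Sum>(x, y, z)\<leftarrow>map (\<lambda>(a, b). (a, b, 1)) (Wl \<beta> c). \<Phi> x y z)" using e1 e2 by simp
qed

end



lemma lin_lS0: "clinear M \<Longrightarrow> M (lS L G) = lS L (\<lambda>a b. M (G a b))"
proof (induct L)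
  case Nil then show ?case by (simp add: clinear_0)
next
  case (Cons p L) then show ?case by (cases p) (simp add: clinear_add)
qed

lemma f_Fphi1: "bilin f \<Longrightarrow> f (Fphi \<delta> \<beta> a) y = lS (\<delta> a) (\<lambda>a0 h. lS (tau \<delta> h) (\<lambda>t1 t2. \<beta> a0 t1 * f t2 y))"
proof -
  assume f: "bilin f"
  have M: "clinear (\<lambda>x. f x y)" by (rule cl_b1[OF f])
  show ?thesis unfolding Fphi_def
    by (simp add: lin_lS0[OF M] clinear_scale[OF M])
qed

lemma f_Fphi2: "bilin f \<Longrightarrow> f x (Fphi \<delta> \<beta> b) = lS (\<delta> b) (\<lambda>a0 h. lS (tau \<delta> h) (\<lambda>t1 t2. \<beta> a0 t1 * f x t2))"
proof -
  assume f: "bilin f"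
  have M: "clinear (f x)" by (rule cl_b2[OF f])
  show ?thesis unfolding Fphi_def
    by (simp add: lin_lS0[OF M] clinear_scale[OF M])
qed

lemma lS_coprod: "lS (esC_coprod \<delta> xs) F = lS xs (\<lambda>a b. lS (\<delta> a) (\<lambda>a0 h. lS (tau \<delta> h) (\<lambda>t1 t2. F (a0, t1) (t2, b))))"
  by (simp add: esC_coprod_def sum_list_concat_map o_def split_def)

lemma lfun_antipode: "lfun \<beta> (esC_antipode \<delta> [(r, y)]) = lS (\<delta> y) (\<lambda>b0 k. lS (tau \<delta> k) (\<lambda>u1 u2. \<beta> b0 (u1 * r * u2)))"
  by (simp add: lfun_def esC_antipode_def sum_list_concat_map o_def split_def)

lemma lS_antipode: "lS (esC_antipode \<delta> [(r, y)]) (\<beta>::_ \<Rightarrow> _ \<Rightarrow> complex) = lS (\<delta> y) (\<lambda>b0 k. lS (tau \<delta> k) (\<lambda>u1 u2. \<beta> b0 (u1 * r * u2)))"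
  using lfun_antipode[of \<beta> \<delta> r y] by (simp add: lfun_def)

lemma sum_concat_cp: "lS (concat (map (case_prod g) L)) f = lS L (\<lambda>a b. lS (g a b) f)"
  by (induct L) auto
lemma sum_map_cp: "lS (map (case_prod g) L) f = lS L (\<lambda>a b. case_prod f (g a b))"
  by (induct L) auto

lemma coinn_sum: "bilin f \<Longrightarrow> (\<Sum>(x, y)\<leftarrow>coinn \<delta> \<beta> c. f x y) = lS (esC_coprod \<delta> c) (\<lambda>c1 d. lS (esC_coprod \<delta> [d]) (\<lambda>c2 c3. (lfun \<beta> [c1] * lfun \<beta> (esC_antipode \<delta> [c3])) * f (fst c2) (snd c2)))"
  unfolding coinn_def sum_concat_cp sum_map_cp by (simp add: bilin_scale1)

context GO begin

lemma main:
  assumes b: "bilin \<beta>" and b11: "\<beta> 1 1 = 1" and c: "c \<in> esC \<delta>"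
  shows "teq2 (Ad \<delta> \<beta> c) (coinn \<delta> \<beta> c)"
proof (rule teq2I)
  fix f :: "'a \<Rightarrow> 'a \<Rightarrow> complex" assume f: "bilin f"
  have "(\<Sum>(x, y)\<leftarrow>Ad \<delta> \<beta> c. f x y) = lS c (\<lambda>x y. f (Fphi \<delta> \<beta> x) (Fphi \<delta> \<beta> y))"
    by (simp add: Ad_def o_def split_def)
  also have "\<dots> = lS c (\<lambda>x y. lS (\<delta> x) (\<lambda>x0 h. lS (tau \<delta> h) (\<lambda>t1 t2. \<beta> x0 t1 * lS (\<delta> y) (\<lambda>y0 k. lS (tau \<delta> k) (\<lambda>s1 s2. \<beta> y0 s1 * f t2 s2)))))"
    apply (intro sum_case_prod_cong)
    apply (rule trans[OF f_Fphi1[OF f]])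
    by (simp add: f_Fphi2[OF f])
  also have "\<dots> = lS (Wl \<beta> c) (\<lambda>u v. lS (\<delta> v) (\<lambda>v0 k. lS (tau \<delta> k) (\<lambda>s1 s2. \<beta> v0 s1 * f u s2)))"
    by (simp add: lS_Wl bilin_scale1[OF f] sum_cp_cmult sum_cp_multc mult.assoc mult.left_commute)
  also have "\<dots> = lS (Wl \<beta> c) (\<lambda>u v. lS (\<delta> u) (\<lambda>u0 h. lS (tau \<delta> h) (\<lambda>t1 t2. lS (\<delta> v) (\<lambda>v0 k. lS (tau \<delta> k) (\<lambda>s1 s2. \<beta> v0 (s1 * t2 * s2) * f u0 t1)))))"
    by (rule stageA[OF b b11 f W_esC[OF c b], symmetric])
  also have "\<dots> = lS c (\<lambda>x y. lS (\<delta> x) (\<lambda>x0 h. lS (tau \<delta> h) (\<lambda>t1 t2. \<beta> x0 t1 * lS (\<delta> t2) (\<lambda>u0 h. lS (tau \<delta> h) (\<lambda>r1 r2. lS (\<delta> y) (\<lambda>v0 k. lS (tau \<delta> k) (\<lambda>s1 s2. \<beta> v0 (s1 * r2 * s2) * f u0 r1)))))))"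
    unfolding lS_Wl
    apply (intro sum_case_prod_cong)
    apply (rule tlin_scale[OF tlin_delta])
    by (intro linI lb1[OF b] lb2[OF b] lb1[OF f] lb2[OF f])
  also have "\<dots> = (\<Sum>(x, y)\<leftarrow>coinn \<delta> \<beta> c. f x y)"
    unfolding coinn_sum[OF f] lS_coprod
    by (simp add: lS_antipode lfun_antipode lfun_def sum_cp_cmult sum_cp_multc mult.assoc mult.left_commute)
  finally show "(\<Sum>(x, y)\<leftarrow>Ad \<delta> \<beta> c. f x y) = (\<Sum>(x, y)\<leftarrow>coinn \<delta> \<beta> c. f x y)" .
qed

end

theorem lemma5p7:
  fixes \<Delta> :: "'h::complex_algebra_1 \<Rightarrow> ('h \<times> 'h) list"
    and \<epsilon> :: "'h \<Rightarrow> complex"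
    and S :: "'h \<Rightarrow> 'h"
    and \<delta> :: "'a::complex_algebra_1 \<Rightarrow> ('a \<times> 'h) list"
    and \<beta> :: "'a \<Rightarrow> 'a \<Rightarrow> complex"
  assumes "hopf_algebra \<Delta> \<epsilon> S"
    and "galois_object \<Delta> \<epsilon> \<delta>"
    and "esC_character \<delta> \<beta>"
    and "c \<in> esC \<delta>"
  shows "teq2 (Ad \<delta> \<beta> c) (coinn \<delta> \<beta> c)"
proof -
  interpret GO \<Delta> \<epsilon> S \<delta> using assms(1,2) by unfold_locales
  from assms(3) have b: "bilin \<beta>" and b11: "\<beta> 1 1 = 1"
    by (simp_all add: esC_character_def lfun_def)
  show ?thesis by (rule main[OF b b11 assms(4)])
qed

end
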